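(* There is a homomorphism from the Grötzsch graph $M(C_5)$ to $S_4$.
   Context: For a graph $G$ and positive integer $r$, the generalized Mycielskian $M_r(G)$ has vertex set $\{(v,i):v\in V(G),0\le i\le r-1\}\cup\{z\}$, with $(u,i)$ adjacent to $(v,j)$ iff $\{u,v\}\in E(G)$ and ($|i-j|=1$ or $i=j=0$), and $z$ adjacent to all $(v,r-1)$, $v\in V(G)$. $M(G)=M_2(G)$; the Grötzsch graph is $M(C_5)$ where $C_5$ is the $5$-cycle. The symmetric shift graph $S_m$ has vertex set $\{(i,j):1\le i,j\le m,\ i\ne j\}$, and $(i,j)$ is adjacent to $(k,\ell)$ iff $j=k$ or $i=\ell$. *)

theory Defs
  imports Main
begin

record 'a graph =
  verts :: "'a set"
  adj :: "'a \<Rightarrow> 'a \<Rightarrow> bool"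

definition graph_hom :: "'a graph \<Rightarrow> 'b graph \<Rightarrow> ('a \<Rightarrow> 'b) \<Rightarrow> bool" where
  "graph_hom G H f \<longleftrightarrow>
     (\<forall>v\<in>verts G. f v \<in> verts H) \<and>
     (\<forall>u\<in>verts G. \<forall>v\<in>verts G. adj G u v \<longrightarrow> adj H (f u) (f v))"

definition cycle_graph :: "nat \<Rightarrow> nat graph" where
  "cycle_graph n = \<lparr> verts = {0..<n},
     adj = (\<lambda>u v. u < n \<and> v < n \<and> u \<noteq> v \<and> (v = (u + 1) mod n \<or> u = (v + 1) mod n)) \<rparr>"

text \<open>Generalized Mycielskian M_r(G): vertices Some (v,i) for v in V(G), i < r,
  and the apex z = None.\<close>
definition gen_mycielskian :: "nat \<Rightarrow> 'a graph \<Rightarrow> ('a \<times> nat) option graph" where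
  "gen_mycielskian r G = \<lparr>
     verts = Some ` (verts G \<times> {0..<r}) \<union> {None},
     adj = (\<lambda>x y. case (x, y) of
        (Some (u, i), Some (v, j)) \<Rightarrow>
           u \<in> verts G \<and> v \<in> verts G \<and> i < r \<and> j < r \<and> adj G u v \<and>
           (i = j + 1 \<or> j = i + 1 \<or> (i = 0 \<and> j = 0))
      | (None, Some (v, j)) \<Rightarrow> v \<in> verts G \<and> j = r - 1
      | (Some (v, j), None) \<Rightarrow> v \<in> verts G \<and> j = r - 1
      | (None, None) \<Rightarrow> False) \<rparr>"

definition mycielskian :: "'a graph \<Rightarrow> ('a \<times> nat) option graph" where
  "mycielskian G = gen_mycielskian 2 G"

definition sym_shift_graph :: "nat \<Rightarrow> (nat \<times> nat) graph" where
  "sym_shift_graph m = \<lparr>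
     verts = {(i, j). 1 \<le> i \<and> i \<le> m \<and> 1 \<le> j \<and> j \<le> m \<and> i \<noteq> j},
     adj = (\<lambda>(i, j) (k, l). j = k \<or> i = l) \<rparr>"

end

theory Submission
  imports Defs
begin

definition hf :: "(nat \<times> nat) option \<Rightarrow> nat \<times> nat" where
  "hf x = (case x of None \<Rightarrow> (3,4)
     | Some (v,i) \<Rightarrow> (if i = 0 then
          (if v = 0 then (1,2) else if v = 1 then (2,1) else if v = 2 then (1,3) else if v = 3 then (3,2) else (2,4))
        else
          (if v = 0 then (4,2) else if v = 1 then (4,1) else if v = 2 then (1,3) else if v = 3 then (4,1) else (2,3))))"

lemma vs: "verts (mycielskian (cycle_graph 5)) =
  {Some (0,0), Some (1,0), Some (2,0), Some (3,0), Some (4,0),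
   Some (0,1), Some (1,1), Some (2,1), Some (3,1), Some (4,1), None}"
proof -
  have a: "{0..<5::nat} = {0,1,2,3,4}" by auto
  have b: "{0..<2::nat} = {0,1}" by auto
  show ?thesis unfolding mycielskian_def gen_mycielskian_def cycle_graph_def
    by (simp add: a b insert_commute)
qed

theorem mainTheorem6:
  shows "\<exists>f. graph_hom (mycielskian (cycle_graph 5)) (sym_shift_graph 4) f"
proof
  show "graph_hom (mycielskian (cycle_graph 5)) (sym_shift_graph 4) hf"
    unfolding graph_hom_def vs
    by (simp add: hf_def sym_shift_graph_def mycielskian_def gen_mycielskian_def cycle_graph_def)
qed

end
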